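(* Let $\{P_n\}$, $\{R_n\}$, $\{S_n\}$ be Brenke polynomial sets with exponential generating functions $A_1(t)B_1(xt)$, $A_2(t)B_2(xt)$, $A_3(t)B_3(xt)$ respectively, where $A_i(t)=\sum_ka^{(i)}_kt^k$, $B_i(t)=\sum_kb^{(i)}_kt^k$, $a^{(i)}_0b^{(i)}_k\ne0$ for all $k$, $i=1,2,3$. Define $L_{ij}(k)$ by $R_i(x)S_j(x)=\sum_{k=0}^{i+j}L_{ij}(k)P_k(x)$. Let $\Omega$ be the linear map from formal power series in one variable $u$ to formal power series in two variables $s,t$ defined termwise by $$\Omega(u^n)=\sum_{l=0}^n\frac{b^{(2)}_l\,b^{(3)}_{n-l}}{b^{(1)}_n}s^lt^{n-l}$$ (in the paper's notation $\Omega=\theta^{(2)}_s\theta^{(3)}_t(\theta^{(1)}_{s+t})^{-1}$ applied to functions of $s+t$, where $\theta^{(i)}(t^n)=n!\,b^{(i)}_nt^n$). Then for every $k\ge0$, $$\frac{A_2(s)A_3(t)}{k!}\,\Omega\!\left(\frac{u^k}{A_1(u)}\right)=\sum_{i,j\ge0}\frac{L_{ij}(k)}{i!\,j!}s^it^j .$$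
   Context: A Brenke polynomial set is a sequence of polynomials $P_n$ with $\deg P_n=n$ generated as formal power series in $t$ by $A(t)B(xt)=\sum_{n\ge0}P_n(x)t^n/n!$, where $A(0)\neq0$ and all Taylor coefficients of $B$ are nonzero. $L_{ij}(k)$ is understood to be $0$ for $k>i+j$. *)

theory Defs
  imports "HOL-Computational_Algebra.Polynomial" "HOL-Computational_Algebra.Formal_Power_Series"
begin

text \<open>Brenke polynomial generated by A(t)B(xt) = \<Sum> P_n(x) t^n / n!:
  P_n(x) = n! \<Sum>_{k\<le>n} a_{n-k} b_k x^k.\<close>
definition brenke_poly :: "'a::field_char_0 fps \<Rightarrow> 'a fps \<Rightarrow> nat \<Rightarrow> 'a poly" where
  "brenke_poly A B n =
     (\<Sum>k\<le>n. monom (fact n * fps_nth A (n - k) * fps_nth B k) k)"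

definition brenke_gf :: "'a::field_char_0 fps \<Rightarrow> 'a fps \<Rightarrow> bool" where
  "brenke_gf A B \<longleftrightarrow> fps_nth A 0 \<noteq> 0 \<and> (\<forall>k. fps_nth B k \<noteq> 0)"

text \<open>Formal power series in two variables s,t represented by their coefficient
  function: F i j is the coefficient of s^i t^j.\<close>
type_synonym 'a fps2 = "nat \<Rightarrow> nat \<Rightarrow> 'a"

definition Omega :: "'a::field_char_0 fps \<Rightarrow> 'a fps \<Rightarrow> 'a fps \<Rightarrow> 'a fps \<Rightarrow> 'a fps2" where
  "Omega B1 B2 B3 f = (\<lambda>l m. fps_nth f (l + m) * fps_nth B2 l * fps_nth B3 m / fps_nth B1 (l + m))"

definition mult_st :: "'a::field_char_0 fps \<Rightarrow> 'a fps \<Rightarrow> 'a fps2 \<Rightarrow> 'a fps2" where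
  "mult_st A C F = (\<lambda>i j. \<Sum>p\<le>i. \<Sum>q\<le>j. fps_nth A p * fps_nth C q * F (i - p) (j - q))"

end

theory Submission
  imports Defs
begin

unbundle fps_syntax

lemma coeff_brenke:
  "coeff (brenke_poly A B n) m = (if m \<le> n then fact n * fps_nth A (n - m) * fps_nth B m else 0)"
  unfolding brenke_poly_def by (simp add: coeff_sum coeff_monom)

lemma phiP:
  fixes A1 B1 :: "'a::field_char_0 fps"
  assumes A0: "fps_nth A1 0 \<noteq> 0" and B: "\<And>n. fps_nth B1 n \<noteq> 0" and le: "k' \<le> M"
  shows "(\<Sum>n\<le>M. coeff (brenke_poly A1 B1 k') n * ((fps_X ^ k * inverse A1) $ n / B1 $ n))
     = fact k' * (if k' = k then 1 else 0)"
proof -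
  have "(\<Sum>n\<le>M. coeff (brenke_poly A1 B1 k') n * ((fps_X ^ k * inverse A1) $ n / B1 $ n))
     = (\<Sum>n\<le>M. if n \<le> k' then fact k' * ((fps_X ^ k * inverse A1) $ n * A1 $ (k' - n)) else 0)"
    by (rule sum.cong) (auto simp: coeff_brenke B)
  also have "\<dots> = (\<Sum>n\<in>{..k'}. fact k' * ((fps_X ^ k * inverse A1) $ n * A1 $ (k' - n)))"
    using le by (intro sum.mono_neutral_cong_right) auto
  also have "\<dots> = fact k' * ((fps_X ^ k * inverse A1) * A1) $ k'"
    by (simp add: fps_mult_nth sum_distrib_left atMost_atLeast0)
  also have "(fps_X ^ k * inverse A1) * A1 = fps_X ^ k"
    using inverse_mult_eq_1[OF A0] by (simp add: mult.assoc)
  finally show ?thesis by (simp add: fps_X_power_nth)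
qed

theorem mainTheorem8:
  fixes A1 B1 A2 B2 A3 B3 :: "'a::field_char_0 fps"
    and L :: "nat \<Rightarrow> nat \<Rightarrow> nat \<Rightarrow> 'a"
  assumes "brenke_gf A1 B1" and "brenke_gf A2 B2" and "brenke_gf A3 B3"
    and L_expand: "\<And>i j. brenke_poly A2 B2 i * brenke_poly A3 B3 j
                      = (\<Sum>k\<le>i + j. smult (L i j k) (brenke_poly A1 B1 k))"
    and L_zero: "\<And>i j k. k > i + j \<Longrightarrow> L i j k = 0"
  shows "\<forall>k i j. mult_st A2 A3 (Omega B1 B2 B3 (fps_X ^ k * inverse A1)) i j / fact k
                  = L i j k / (fact i * fact j)"
proof (intro allI)
  fix k i j :: nat
  have A0: "fps_nth A1 0 \<noteq> 0" and B: "\<And>n. fps_nth B1 n \<noteq> 0"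
    using assms(1) by (auto simp: brenke_gf_def)
  define g where "g n = (fps_X ^ k * inverse A1) $ n / B1 $ n" for n
  define \<Phi> where "\<Phi> p = (\<Sum>n\<le>i+j. coeff p n * g n)" for p :: "'a poly"
  define R where "R = brenke_poly A2 B2 i"
  define S where "S = brenke_poly A3 B3 j"
  have phi1: "\<Phi> (R * S) = L i j k * fact k"
  proof -
    have "\<Phi> (R * S) = (\<Sum>n\<le>i+j. \<Sum>k'\<le>i+j. L i j k' * (coeff (brenke_poly A1 B1 k') n * g n))"
      unfolding \<Phi>_def R_def S_def L_expand
      by (simp add: coeff_sum sum_distrib_right mult.assoc)
    also have "\<dots> = (\<Sum>k'\<le>i+j. \<Sum>n\<le>i+j. L i j k' * (coeff (brenke_poly A1 B1 k') n * g n))"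
      by (rule sum.swap)
    also have "\<dots> = (\<Sum>k'\<le>i+j. L i j k' * \<Phi> (brenke_poly A1 B1 k'))"
      by (simp add: \<Phi>_def sum_distrib_left)
    also have "\<dots> = (\<Sum>k'\<le>i+j. L i j k' * (fact k' * (if k' = k then 1 else 0)))"
      apply (rule sum.cong[OF refl])
      subgoal for x using phiP[OF A0 B, of x "i+j" k] by (simp add: \<Phi>_def g_def)
      done
    also have "\<dots> = L i j k * fact k"
      using L_zero[of i j k] by (auto simp: sum.delta' if_distrib cong: if_cong)
    finally show ?thesis .
  qed
  have phi2: "\<Phi> (R * S) = (\<Sum>p\<le>i. \<Sum>q\<le>j. coeff R p * coeff S q * g (p + q))"
  proof -
    have "\<Phi> (R * S) = (\<Sum>n\<le>i+j. \<Sum>p\<le>n. coeff R p * coeff S (n - p) * g (p + (n - p)))"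
      unfolding \<Phi>_def by (simp add: coeff_mult sum_distrib_right)
    also have "\<dots> = (\<Sum>(p,q)\<in>{(p,q). p+q \<le> i+j}. coeff R p * coeff S q * g (p + q))"
      by (rule sum.triangle_reindex_eq[symmetric])
    also have "\<dots> = (\<Sum>(p,q)\<in>{..i}\<times>{..j}. coeff R p * coeff S q * g (p + q))"
      by (rule sum.mono_neutral_right)
         (auto simp: R_def S_def coeff_brenke split: if_splits
               intro: finite_subset[of _ "{..i+j}\<times>{..i+j}"])
    also have "\<dots> = (\<Sum>p\<le>i. \<Sum>q\<le>j. coeff R p * coeff S q * g (p + q))"
      by (simp add: sum.cartesian_product)
    finally show ?thesis .
  qed
  have lhs: "mult_st A2 A3 (Omega B1 B2 B3 (fps_X ^ k * inverse A1)) i j * (fact i * fact j)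
      = (\<Sum>p\<le>i. \<Sum>q\<le>j. coeff R p * coeff S q * g (p + q))"
  proof -
    have "mult_st A2 A3 (Omega B1 B2 B3 (fps_X ^ k * inverse A1)) i j * (fact i * fact j)
        = (\<Sum>p\<le>i. \<Sum>q\<le>j. coeff R (i - p) * coeff S (j - q) * g ((i - p) + (j - q)))"
      unfolding mult_st_def Omega_def sum_distrib_right
      apply (rule sum.cong[OF refl])+
      apply (simp add: R_def S_def g_def coeff_brenke)
      done
    also have "\<dots> = (\<Sum>p\<le>i. \<Sum>q\<le>j. coeff R p * coeff S q * g (p + q))"
    proof -
      have r: "(\<Sum>p\<le>n. h (n - p)) = (\<Sum>p\<le>n. h p)" for h :: "nat \<Rightarrow> 'a" and n
        using sum.atLeastAtMost_rev[of h 0 n] by (simp add: atMost_atLeast0)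
      show ?thesis
        by (subst r[of "\<lambda>p. \<Sum>q\<le>j. coeff R p * coeff S (j - q) * g (p + (j - q))"])
           (rule sum.cong[OF refl], rule r[of "\<lambda>q. coeff R _ * coeff S q * g (_ + q)"])
    qed
    finally show ?thesis .
  qed
  have fne: "fact i * fact j \<noteq> (0::'a)" "fact k \<noteq> (0::'a)" by simp_all
  show "mult_st A2 A3 (Omega B1 B2 B3 (fps_X ^ k * inverse A1)) i j / fact k
                  = L i j k / (fact i * fact j)"
    using lhs phi1 phi2 fne by (simp add: field_simps)
qed

end
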